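(* In the setting below with $R_1=R$ and $R_2=R^c$, regard $G$ and $\Phi$ as fixed and parametrize by $b_R=b_{R_1}$ and $m_R=b_RG_R/G$ (where $G_R=G_{R_1}$). Then the log-likelihood ratio statistic $\Delta$ satisfies $\Delta=\frac{G}{\Phi}\,E(m_R,b_R)+c$, where $c$ is a constant not depending on $R$ and $$E(m_R,b_R)=m_R\,g_e\!\Big(G\tfrac{m_R}{b_R}\Big)-\tfrac{b_R}{G}B_e\!\Big(g_e\!\Big(G\tfrac{m_R}{b_R}\Big)\Big)+(1-m_R)\,g_e\!\Big(G\tfrac{1-m_R}{1-b_R}\Big)-\tfrac{1-b_R}{G}B_e\!\Big(g_e\!\Big(G\tfrac{1-m_R}{1-b_R}\Big)\Big).$$ That is, the discrepancy measure $d(m_R,b_R)$ (ignoring additive constants) satisfies $d(m_R,b_R)\frac{\Phi}{G}=E(m_R,b_R)$.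
   Context: A random variable $y$ belongs to $\mathrm{1EXP}(\eta,\phi,T,B_e,a)$ if it has density $C(y,\phi)\exp((\eta T(y)-B_e(\eta))/a(\phi))$ with $T$ measurable, $\phi>0$ known, $B_e$ strictly convex, and support independent of $\eta$; $g_e=(B_e')^{-1}$. For independent $y_i\sim\mathrm{1EXP}(\eta,\phi_i,T,B_e,a)$, $i\in S$, let $1/\phi^*=\sum_{i\in S}1/a(\phi_i)$ and $T^*(\mathbf{y})=\sum_{i\in S}(\phi^*/a(\phi_i))T(y_i)$. Setting: for $j=1,2$, $\mathbf{y}_{R_j}=(y_{R_ji}:i\in R_j)$ are mutually independent with $y_{R_ji}\sim\mathrm{1EXP}(\eta_{R_j},\phi_{R_ji},T,B_e,a)$. Let $\kappa(x,y)=(x g_e(x)-B_e(g_e(x)))/y$, $G_{R_j}=T^*(\mathbf{y}_{R_j})$, $1/\Phi_{R_j}=\sum_{i\in R_j}1/a(\phi_{R_ji})$, $1/\Phi=1/\Phi_{R_1}+1/\Phi_{R_2}$, $b_{R_1}=\frac{1/\Phi_{R_1}}{1/\Phi_{R_1}+1/\Phi_{R_2}}$, $G=b_{R_1}G_{R_1}+(1-b_{R_1})G_{R_2}$, and the log-likelihood ratio statistic for $H_0:\eta_{R_1}=\eta_{R_2}$ vs $H_1:\eta_{R_1}\ne\eta_{R_2}$ is $\Delta=\kappa(G_{R_1},\Phi_{R_1})+\kappa(G_{R_2},\Phi_{R_2})-\kappa(G,\Phi)$. *)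

theory Defs
  imports "HOL-Analysis.Analysis"
begin

definition strictly_convex :: "(real \<Rightarrow> real) \<Rightarrow> bool" where
  "strictly_convex f \<longleftrightarrow>
     (\<forall>x y t. x \<noteq> y \<and> 0 < t \<and> t < 1 \<longrightarrow>
        f ((1 - t) * x + t * y) < (1 - t) * f x + t * f y)"

definition PhiS :: "(real \<Rightarrow> real) \<Rightarrow> ('i \<Rightarrow> real) \<Rightarrow> 'i set \<Rightarrow> real" where
  "PhiS a phi S = 1 / (\<Sum>i\<in>S. 1 / a (phi i))"

definition Tstar :: "(real \<Rightarrow> real) \<Rightarrow> ('i \<Rightarrow> real) \<Rightarrow> ('y \<Rightarrow> real) \<Rightarrow> ('i \<Rightarrow> 'y)
    \<Rightarrow> 'i set \<Rightarrow> real" where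
  "Tstar a phi T y S = (\<Sum>i\<in>S. (PhiS a phi S / a (phi i)) * T (y i))"

definition kappa :: "(real \<Rightarrow> real) \<Rightarrow> (real \<Rightarrow> real) \<Rightarrow> real \<Rightarrow> real \<Rightarrow> real" where
  "kappa B g x z = (x * g x - B (g x)) / z"

definition bR :: "(real \<Rightarrow> real) \<Rightarrow> ('i \<Rightarrow> real) \<Rightarrow> 'i set \<Rightarrow> 'i set \<Rightarrow> real" where
  "bR a phi R1 R2 =
     (1 / PhiS a phi R1) / (1 / PhiS a phi R1 + 1 / PhiS a phi R2)"

definition PhiTot :: "(real \<Rightarrow> real) \<Rightarrow> ('i \<Rightarrow> real) \<Rightarrow> 'i set \<Rightarrow> 'i set \<Rightarrow> real" where
  "PhiTot a phi R1 R2 = 1 / (1 / PhiS a phi R1 + 1 / PhiS a phi R2)"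

definition GTot :: "(real \<Rightarrow> real) \<Rightarrow> ('i \<Rightarrow> real) \<Rightarrow> ('y \<Rightarrow> real) \<Rightarrow> ('i \<Rightarrow> 'y)
    \<Rightarrow> 'i set \<Rightarrow> 'i set \<Rightarrow> real" where
  "GTot a phi T y R1 R2 =
     bR a phi R1 R2 * Tstar a phi T y R1 + (1 - bR a phi R1 R2) * Tstar a phi T y R2"

definition LLR :: "(real \<Rightarrow> real) \<Rightarrow> (real \<Rightarrow> real) \<Rightarrow> (real \<Rightarrow> real) \<Rightarrow> ('i \<Rightarrow> real)
    \<Rightarrow> ('y \<Rightarrow> real) \<Rightarrow> ('i \<Rightarrow> 'y) \<Rightarrow> 'i set \<Rightarrow> 'i set \<Rightarrow> real" where
  "LLR B g a phi T y R1 R2 =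
     kappa B g (Tstar a phi T y R1) (PhiS a phi R1)
   + kappa B g (Tstar a phi T y R2) (PhiS a phi R2)
   - kappa B g (GTot a phi T y R1 R2) (PhiTot a phi R1 R2)"

definition mR :: "(real \<Rightarrow> real) \<Rightarrow> ('i \<Rightarrow> real) \<Rightarrow> ('y \<Rightarrow> real) \<Rightarrow> ('i \<Rightarrow> 'y)
    \<Rightarrow> 'i set \<Rightarrow> 'i set \<Rightarrow> real" where
  "mR a phi T y R1 R2 =
     bR a phi R1 R2 * Tstar a phi T y R1 / GTot a phi T y R1 R2"

definition Efun :: "(real \<Rightarrow> real) \<Rightarrow> (real \<Rightarrow> real) \<Rightarrow> real \<Rightarrow> real \<Rightarrow> real \<Rightarrow> real" where
  "Efun B g G m b =
     m * g (G * (m / b)) - (b / G) * B (g (G * (m / b)))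
   + (1 - m) * g (G * ((1 - m) / (1 - b))) - ((1 - b) / G) * B (g (G * ((1 - m) / (1 - b))))"

end

theory Submission
  imports Defs
begin

lemma alg:
  fixes s1 s2 t1 t2 :: real and B g :: "real \<Rightarrow> real"
  assumes s1: "s1 > 0" and s2: "s2 > 0" and G: "(s1/(s1+s2)) * (t1/s1) + (1 - s1/(s1+s2)) * (t2/s2) \<noteq> 0"
  defines "b \<equiv> s1/(s1+s2)"
  defines "Gt \<equiv> b * (t1/s1) + (1 - b) * (t2/s2)"
  shows "kappa B g (t1/s1) (1/s1) + kappa B g (t2/s2) (1/s2) - kappa B g Gt (1/(s1+s2))
     = Gt / (1/(s1+s2)) * Efun B g Gt (b * (t1/s1) / Gt) b - kappa B g ((t1+t2)/(s1+s2)) (1/(s1+s2))"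
proof -
  have q1: "b * (t1/s1) = t1/(s1+s2)" unfolding b_def using s1 s2 by simp
  have q2: "(1-b) * (t2/s2) = t2/(s1+s2)" unfolding b_def using s1 s2 by (simp add: field_simps)
  have Gt: "Gt = (t1+t2)/(s1+s2)" unfolding Gt_def q1 q2 by (simp add: add_divide_distrib)
  have Gt0: "Gt \<noteq> 0" using G unfolding Gt_def b_def .
  have b1: "1 - b = s2/(s1+s2)" unfolding b_def using s1 s2 by (simp add: field_simps)
  have e1: "Gt * ((b * (t1/s1) / Gt) / b) = t1/s1" proof -
    have "b > 0" unfolding b_def using s1 s2 by simp
    then show ?thesis using Gt0 by simp
  qed
  have m1: "1 - b * (t1/s1) / Gt = (1-b) * (t2/s2) / Gt"
  proof -
    have "1 - b * (t1/s1) / Gt = (Gt - b * (t1/s1)) / Gt" using Gt0 by (simp add: diff_divide_distrib)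
    also have "Gt - b * (t1/s1) = (1-b) * (t2/s2)" unfolding Gt_def by simp
    finally show ?thesis .
  qed
  have e2: "Gt * ((1 - b * (t1/s1) / Gt) / (1 - b)) = t2/s2" unfolding m1
  proof -
    have "1 - b > 0" unfolding b1 using s1 s2 by simp
    then show "Gt * ((1 - b) * (t2 / s2) / Gt / (1 - b)) = t2 / s2" using Gt0 by simp
  qed
  have f1: "Gt / (1/(s1+s2)) * (b * (t1/s1) / Gt) = t1" unfolding q1 using Gt0 s1 s2 by simp
  have f2: "Gt / (1/(s1+s2)) * ((1-b) * (t2/s2) / Gt) = t2" unfolding q2 using Gt0 s1 s2 by simp
  have f3: "Gt / (1/(s1+s2)) * (b / Gt) = s1" unfolding b_def using Gt0 s1 s2 by simp
  have f4: "Gt / (1/(s1+s2)) * ((1-b) / Gt) = s2" unfolding b1 using Gt0 s1 s2 by simp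
  have k1: "kappa B g (t1/s1) (1/s1) = t1 * g (t1/s1) - s1 * B (g (t1/s1))" unfolding kappa_def using s1
    by (simp add: field_simps)
  have k2: "kappa B g (t2/s2) (1/s2) = t2 * g (t2/s2) - s2 * B (g (t2/s2))" unfolding kappa_def using s2
    by (simp add: field_simps)
  have "Gt / (1/(s1+s2)) * Efun B g Gt (b * (t1/s1) / Gt) b
     = (Gt / (1/(s1+s2)) * (b * (t1/s1) / Gt)) * g (t1/s1) - (Gt / (1/(s1+s2)) * (b / Gt)) * B (g (t1/s1))
     + (Gt / (1/(s1+s2)) * ((1-b) * (t2/s2) / Gt)) * g (t2/s2) - (Gt / (1/(s1+s2)) * ((1-b) / Gt)) * B (g (t2/s2))"
    unfolding Efun_def e1 e2 unfolding m1 using Gt0 s1 s2 by (simp add: field_simps)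
  also have "\<dots> = kappa B g (t1/s1) (1/s1) + kappa B g (t2/s2) (1/s2)"
    unfolding f1 f2 f3 f4 k1 k2 by simp
  finally show ?thesis unfolding Gt[symmetric] by simp
qed

theorem theorem6p3:
  fixes B g a :: "real \<Rightarrow> real"
    and I :: "'i set" and phi :: "'i \<Rightarrow> real"
    and T :: "'y \<Rightarrow> real" and y :: "'i \<Rightarrow> 'y"
  assumes "strictly_convex B"
    and "\<And>x. B differentiable (at x)"
    and "\<And>x. g (deriv B x) = x"
    and "finite I"
    and "\<And>i. i \<in> I \<Longrightarrow> phi i > 0"
    and "\<And>i. i \<in> I \<Longrightarrow> a (phi i) > 0"
  shows "\<exists>c::real. \<forall>R. R \<subseteq> I \<and> R \<noteq> {} \<and> I - R \<noteq> {} \<and> GTot a phi T y R (I - R) \<noteq> 0 \<longrightarrow>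
           LLR B g a phi T y R (I - R) =
             GTot a phi T y R (I - R) / PhiTot a phi R (I - R)
               * Efun B g (GTot a phi T y R (I - R)) (mR a phi T y R (I - R)) (bR a phi R (I - R))
             + c"
proof (intro exI allI impI)
  fix R assume H: "R \<subseteq> I \<and> R \<noteq> {} \<and> I - R \<noteq> {} \<and> GTot a phi T y R (I - R) \<noteq> 0"
  define s1 where "s1 = (\<Sum>i\<in>R. 1 / a (phi i))"
  define s2 where "s2 = (\<Sum>i\<in>I-R. 1 / a (phi i))"
  define t1 where "t1 = (\<Sum>i\<in>R. T (y i) / a (phi i))"
  define t2 where "t2 = (\<Sum>i\<in>I-R. T (y i) / a (phi i))"
  have fR: "finite R" using H assms(4) finite_subset by blast
  have fR2: "finite (I - R)" using assms(4) by simp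
  have s1p: "s1 > 0" unfolding s1_def using H fR assms(6)
    by (intro sum_pos) auto
  have s2p: "s2 > 0" unfolding s2_def using H fR2 assms(6)
    by (intro sum_pos) auto
  have SI: "s1 + s2 = (\<Sum>i\<in>I. 1 / a (phi i))" unfolding s1_def s2_def
    using sum.subset_diff[OF _ assms(4), of R] H by (metis add.commute)
  have TI: "t1 + t2 = (\<Sum>i\<in>I. T (y i) / a (phi i))" unfolding t1_def t2_def
    using sum.subset_diff[OF _ assms(4), of R] H by (metis add.commute)
  have P1: "PhiS a phi R = 1/s1" unfolding PhiS_def s1_def ..
  have P2: "PhiS a phi (I-R) = 1/s2" unfolding PhiS_def s2_def ..
  have T1: "Tstar a phi T y R = t1/s1" unfolding Tstar_def P1 t1_def
    by (simp add: sum_distrib_left sum_divide_distrib mult.commute)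
  have T2: "Tstar a phi T y (I-R) = t2/s2" unfolding Tstar_def P2 t2_def
    by (simp add: sum_distrib_left sum_divide_distrib mult.commute)
  have bb: "bR a phi R (I-R) = s1/(s1+s2)" unfolding bR_def P1 P2 by simp
  have PT: "PhiTot a phi R (I-R) = 1/(s1+s2)" unfolding PhiTot_def P1 P2 by simp
  have GG: "GTot a phi T y R (I-R) = (s1/(s1+s2)) * (t1/s1) + (1 - s1/(s1+s2)) * (t2/s2)"
    unfolding GTot_def bb T1 T2 ..
  have "LLR B g a phi T y R (I - R) =
             GTot a phi T y R (I - R) / PhiTot a phi R (I - R)
               * Efun B g (GTot a phi T y R (I - R)) (mR a phi T y R (I - R)) (bR a phi R (I - R))
             - kappa B g ((t1+t2)/(s1+s2)) (1/(s1+s2))"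
    unfolding LLR_def mR_def PT bb T1 T2 P1 P2 GG
    using alg[OF s1p s2p, of t1 t2 B g] H GG by simp
  then show "LLR B g a phi T y R (I - R) =
             GTot a phi T y R (I - R) / PhiTot a phi R (I - R)
               * Efun B g (GTot a phi T y R (I - R)) (mR a phi T y R (I - R)) (bR a phi R (I - R))
             + (- kappa B g ((\<Sum>i\<in>I. T (y i) / a (phi i)) / (\<Sum>i\<in>I. 1 / a (phi i))) (1/(\<Sum>i\<in>I. 1 / a (phi i))))"
    unfolding SI TI by simp
qed

end
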